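(* Let $r\geqslant 3$ be an odd integer and let $\Gamma\cong\mathbb{Z}_{2r}\oplus\mathbb{Z}_2\oplus\mathbb{Z}_2\oplus\mathbb{Z}_2$. Then there exists an $\mathrm{MRS}_\Gamma(r,8;2)$ in which every row sum and every column sum equals $0_\Gamma$.
   Context: For an abelian group $\Gamma$ of order $abc$, an $\mathrm{MRS}_\Gamma(a,b;c)$ is a collection of $c$ arrays of size $a\times b$ whose entries are the elements of $\Gamma$, each appearing exactly once and in a unique array, such that there are $\omega,\delta\in\Gamma$ with every row sum (in every array) equal to $\omega$ and every column sum (in every array) equal to $\delta$. *)

theory Defs
  imports "HOL-Algebra.Algebra"
begin

text \<open>A collection of c arrays of size a x b, given as A k i j (array k < c, row i < a,
  column j < b), with entries in the (abelian) group G written multiplicatively in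
  HOL-Algebra (so the group operation is the paper's +, and one is 0).\<close>
definition MRS_with ::
  "('g, 'm) monoid_scheme \<Rightarrow> nat \<Rightarrow> nat \<Rightarrow> nat \<Rightarrow> (nat \<Rightarrow> nat \<Rightarrow> nat \<Rightarrow> 'g) \<Rightarrow> 'g \<Rightarrow> 'g \<Rightarrow> bool"
where
  "MRS_with G a b c A \<omega> \<delta> \<longleftrightarrow>
     bij_betw (\<lambda>(k, i, j). A k i j) ({..<c} \<times> {..<a} \<times> {..<b}) (carrier G) \<and>
     (\<forall>k<c. \<forall>i<a. finprod G (\<lambda>j. A k i j) {..<b} = \<omega>) \<and>
     (\<forall>k<c. \<forall>j<b. finprod G (\<lambda>i. A k i j) {..<a} = \<delta>)"

definition is_MRS ::
  "('g, 'm) monoid_scheme \<Rightarrow> nat \<Rightarrow> nat \<Rightarrow> nat \<Rightarrow> (nat \<Rightarrow> nat \<Rightarrow> nat \<Rightarrow> 'g) \<Rightarrow> bool"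
where
  "is_MRS G a b c A \<longleftrightarrow> (\<exists>\<omega>\<in>carrier G. \<exists>\<delta>\<in>carrier G. MRS_with G a b c A \<omega> \<delta>)"

end

theory Submission
  imports Defs
begin


definition gflat :: "(int \<times> nat) list" where
 "gflat = [(0, 0), (0, 3), (1, 1), (-1, 7), (1, 6), (-1, 6), (0, 7), (0, 2), (0, 6), (0, 9), (1, 15), (-1, 15), (1, 5), (-1, 8), (0, 10), (0, 8),
 (1, 0), (-1, 1), (0, 4), (0, 14), (-1, 13), (1, 11), (1, 3), (-1, 14), (1, 13), (-1, 3), (0, 5), (0, 1), (-1, 9), (1, 7), (1, 8), (-1, 12),
 (-1, 0), (1, 2), (-1, 5), (1, 9), (0, 11), (0, 13), (-1, 4), (1, 12), (-1, 11), (1, 10), (-1, 10), (1, 14), (0, 12), (0, 15), (-1, 2), (1, 4)]"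

definition bt :: "nat \<Rightarrow> nat \<Rightarrow> int" where "bt b v = int ((v div 2^b) mod 2)"
lemma bt01: "bt b v = 0 \<or> bt b v = 1" by (auto simp: bt_def)

lemma gflat_len: "length gflat = 48" by (simp add: gflat_def)
lemma gflat_distinct: "distinct gflat" by (simp add: gflat_def)
lemma gflat_range: "\<forall>x\<in>set gflat. fst x \<in> {-1,0,1} \<and> snd x < 16" by (simp add: gflat_def)

lemma lt8: "{..<8::nat} = {0,1,2,3,4,5,6,7}" by auto
lemma lt3: "{..<3::nat} = {0,1,2}" by auto
lemma less8: "(j::nat) < 8 \<Longrightarrow> j = 0 \<or> j = 1 \<or> j = 2 \<or> j = 3 \<or> j = 4 \<or> j = 5 \<or> j = 6 \<or> j = 7" by auto

lemma grow_a: assumes "i < 3" "k < 2" shows "(\<Sum>j<8. fst (gflat ! (16*i+8*k+j))) = 0"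
proof -
  have "i = 0 \<or> i = 1 \<or> i = 2" "k = 0 \<or> k = 1" using assms by auto
  then show ?thesis by (elim disjE; simp add: lt8 gflat_def)
qed
lemma grow_b: assumes "i < 3" "k < 2" "b < 4" shows "even (\<Sum>j<8. bt b (snd (gflat ! (16*i+8*k+j))))"
proof -
  have "i = 0 \<or> i = 1 \<or> i = 2" "k = 0 \<or> k = 1" "b = 0 \<or> b = 1 \<or> b = 2 \<or> b = 3" using assms by auto
  then show ?thesis by (elim disjE; simp add: lt8 gflat_def bt_def)
qed
lemma gcol_a: assumes "j < 8" "k < 2" shows "(\<Sum>i<3. fst (gflat ! (16*i+8*k+j))) = 0"
proof -
  have "k = 0 \<or> k = 1" using assms by auto
  then show ?thesis using less8[OF assms(1)] by (elim disjE; simp add: lt3 gflat_def)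
qed
lemma gcol_b: assumes "j < 8" "k < 2" "b < 4" shows "even (\<Sum>i<3. bt b (snd (gflat ! (16*i+8*k+j))))"
proof -
  have "k = 0 \<or> k = 1" "b = 0 \<or> b = 1 \<or> b = 2 \<or> b = 3" using assms by auto
  then show ?thesis using less8[OF assms(1)] by (elim disjE; simp add: lt3 gflat_def bt_def)
qed
definition ga :: "nat \<Rightarrow> nat \<Rightarrow> nat \<Rightarrow> int" where
 "ga k i j = (if i < 3 then fst (gflat ! (16*i+8*k+j))
    else (if even (i-3) then 1 else -1) * (if j < 4 then 1 else -1) * int ((i-3) div 2 + 2))"
definition gv :: "nat \<Rightarrow> nat \<Rightarrow> nat \<Rightarrow> nat" where
 "gv k i j = (if i < 3 then snd (gflat ! (16*i+8*k+j)) else 8*k+j)"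

lemma gflat_nth: assumes "i < 3" "k < 2" "j < 8"
  shows "fst (gflat ! (16*i+8*k+j)) \<in> {-1,0,1} \<and> snd (gflat ! (16*i+8*k+j)) < 16"
proof -
  have "16*i+8*k+j < 48" using assms by simp
  then have "gflat ! (16*i+8*k+j) \<in> set gflat" by (simp add: gflat_len)
  then show ?thesis using gflat_range by blast
qed

lemma pair_sum: "(\<Sum>i\<in>{3..<3+2*n}. f i) = (\<Sum>m<n. f (3+2*m) + f (4+2*m::nat)) "
proof (induction n)
  case 0 then show ?case by simp
next
  case (Suc n)
  have "{3..<3+2*Suc n} = insert (4+2*n) (insert (3+2*n) {3..<3+2*n})" by auto
  then show ?case using Suc by (simp add: add_ac)
qed

lemma col_split: fixes r :: nat assumes "odd r" "r \<ge> 3"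
  shows "(\<Sum>i<r. f i) = (\<Sum>i<3. f i) + (\<Sum>m<(r-3) div 2. f (3+2*m) + f (4+2*m))"
proof -
  have r: "r = 3 + 2*((r-3) div 2)" using assms by presburger
  have "{..<r} = {..<3} \<union> {3..<3+2*((r-3) div 2)}" using r by auto
  then have "(\<Sum>i<r. f i) = (\<Sum>i<3. f i) + (\<Sum>i\<in>{3..<3+2*((r-3) div 2)}. f i)"
    by (simp add: sum.union_disjoint ivl_disj_int(2))
  then show ?thesis by (simp add: pair_sum)
qed

lemma col_a: assumes "odd r" "r \<ge> 3" "k < 2" "j < 8" shows "(\<Sum>i<r. ga k i j) = 0"
proof -
  have "(\<Sum>i<3. ga k i j) = 0" using gcol_a[OF assms(4,3)] by (simp add: ga_def)
  moreover have "ga k (3+2*m) j + ga k (4+2*m) j = 0" for m by (simp add: ga_def)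
  ultimately show ?thesis by (simp add: col_split[OF assms(1,2)])
qed

lemma col_b: assumes "odd r" "r \<ge> 3" "k < 2" "j < 8" "b < 4" shows "even (\<Sum>i<r. bt b (gv k i j))"
proof -
  have "even (\<Sum>i<3. bt b (gv k i j))" using gcol_b[OF assms(4,3,5)] by (simp add: gv_def)
  moreover have "bt b (gv k (3+2*m) j) + bt b (gv k (4+2*m) j) = 2 * bt b (8*k+j)" for m by (simp add: gv_def)
  ultimately show ?thesis by (simp add: col_split[OF assms(1,2)] sum_distrib_left[symmetric])
qed

lemma row_a: assumes "k < 2" shows "(\<Sum>j<8. ga k i j) = 0"
proof (cases "i < 3")
  case True then show ?thesis using grow_a[OF True assms] by (simp add: ga_def)
next
  case False then show ?thesis by (simp add: ga_def lt8)
qed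

lemma row_b: assumes "k < 2" "b < 4" shows "even (\<Sum>j<8. bt b (gv k i j))"
proof (cases "i < 3")
  case True then show ?thesis using grow_b[OF True assms] by (simp add: gv_def)
next
  case False
  have "k = 0 \<or> k = 1" "b = 0 \<or> b = 1 \<or> b = 2 \<or> b = 3" using assms by auto
  then show ?thesis using False by (elim disjE; simp add: gv_def lt8 bt_def)
qed

lemma ga_bound: assumes "odd r" "r \<ge> 3" "i < r" "k < 2" "j < 8" shows "2 * \<bar>ga k i j\<bar> < int r"
proof (cases "i < 3")
  case True then show ?thesis using gflat_nth[OF True assms(4,5)] assms by (auto simp: ga_def)
next
  case False
  have "2 * ((i-3) div 2 + 2) < r" using False assms by presburger
  then show ?thesis using False by (simp add: ga_def abs_mult)
qed

lemma gv_bound: assumes "k < 2" "j < 8" shows "gv k i j < 16"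
  using gflat_nth[of i k j] assms by (auto simp: gv_def)


lemma idx_inj: fixes i k j :: nat assumes "k<2" "j<8" "k'<2" "j'<8" "16*i+8*k+j = 16*i'+8*k'+j'"
  shows "i=i' \<and> k=k' \<and> j=j'"
proof -
  have h: "16*i+8*k+j = j + 8 * (k + 2 * i)" "16*i'+8*k'+j' = j' + 8 * (k' + 2 * i')" by simp_all
  have "(j + 8 * (k + 2 * i)) mod 8 = j" "(j + 8 * (k + 2 * i)) div 8 = k + 2*i"
       "(j' + 8 * (k' + 2 * i')) mod 8 = j'" "(j' + 8 * (k' + 2 * i')) div 8 = k' + 2*i'" using assms(2,4) by presburger+
  then have "j = j'" "k + 2*i = k' + 2*i'" using assms(5) h by metis+
  moreover have "(k + 2*i) mod 2 = k" "(k' + 2*i') mod 2 = k'" "(k + 2*i) div 2 = i" "(k' + 2*i') div 2 = i'" using assms by simp_all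
  ultimately show ?thesis by metis
qed

lemma sign_inj: fixes x y :: nat
  assumes "(if even x then 1 else -1) * int (x div 2 + 2) = (if even y then 1 else (-1::int)) * int (y div 2 + 2)"
  shows "x = y"
proof (cases "even x")
  case True
  show ?thesis
  proof (cases "even y")
    case True
    then have "x div 2 = y div 2" using assms \<open>even x\<close> by simp
    then show ?thesis using True \<open>even x\<close> by (metis dvd_mult_div_cancel)
  next
    case False then show ?thesis using assms \<open>even x\<close> by simp
  qed
next
  case False
  show ?thesis
  proof (cases "even y")
    case True then show ?thesis using assms \<open>odd x\<close> by simp
  next
    case f2: False
    then have "x div 2 = y div 2" using assms \<open>odd x\<close> by simp
    then show ?thesis using f2 \<open>odd x\<close> by (metis odd_two_times_div_two_succ)
  qed
qed

lemma cancel3: "s \<noteq> 0 \<Longrightarrow> a * s * b = c * s * d \<Longrightarrow> a * b = c * (d::int)"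
  by (metis mult.assoc mult.commute mult_cancel_left)

lemma cell_inj: assumes "k < 2" "j < 8" "k' < 2" "j' < 8"
  and "ga k i j = ga k' i' j'" and "gv k i j = gv k' i' j'"
  shows "k = k' \<and> i = i' \<and> j = j'"
proof (cases "i < 3")
  case True
  note T = True
  show ?thesis
  proof (cases "i' < 3")
    case True
    have "gflat ! (16*i+8*k+j) = gflat ! (16*i'+8*k'+j')"
      using assms(5,6) T True by (simp add: ga_def gv_def prod_eq_iff)
    moreover have "16*i+8*k+j < length gflat" "16*i'+8*k'+j' < length gflat"
      using assms(1-4) T True by (simp_all add: gflat_len)
    ultimately have "16*i+8*k+j = 16*i'+8*k'+j'"
      using gflat_distinct nth_eq_iff_index_eq by blast
    then show ?thesis using idx_inj assms(1-4) by blast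
  next
    case False
    have "\<bar>ga k i j\<bar> \<le> 1" using gflat_nth[OF T assms(1,2)] T by (auto simp: ga_def)
    moreover have "\<bar>ga k' i' j'\<bar> \<ge> 2" using False by (simp add: ga_def abs_mult)
    ultimately show ?thesis using assms(5) by simp
  qed
next
  case False
  note F = False
  show ?thesis
  proof (cases "i' < 3")
    case True
    have "\<bar>ga k' i' j'\<bar> \<le> 1" using gflat_nth[OF True assms(3,4)] True by (auto simp: ga_def)
    moreover have "\<bar>ga k i j\<bar> \<ge> 2" using F by (simp add: ga_def abs_mult)
    ultimately show ?thesis using assms(5) by simp
  next
    case False
    have "8*k+j = 8*k'+j'" using assms(6) F False by (simp add: gv_def)
    then have kj: "k = k'" "j = j'" using idx_inj[of k j k' j' 0 0] assms(1-4) by simp_all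
    have "(if even (i-3) then 1 else -1) * (if j < 4 then 1 else -1) * int ((i-3) div 2 + 2) = (if even (i'-3) then 1 else (-1::int)) * (if j < 4 then 1 else -1) * int ((i'-3) div 2 + 2)"
      using assms(5) F False kj by (simp add: ga_def)
    moreover have "(if j < 4 then 1 else -1::int) \<noteq> 0" by simp
    ultimately have "(if even (i-3) then 1 else -1) * int ((i-3) div 2 + 2) = (if even (i'-3) then 1 else (-1::int)) * int ((i'-3) div 2 + 2)"
      using cancel3 by blast
    then have "i - 3 = i' - 3" by (rule sign_inj)
    then have "i = i'" using F False by simp
    then show ?thesis using kj by simp
  qed
qed
lemma bits16: assumes "v < 16" shows "int v = bt 0 v + 2 * bt 1 v + 4 * bt 2 v + 8 * bt 3 v"
proof -
  have a: "v = v mod 2 + 2 * (v div 2)" by simp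
  have b: "v div 2 = (v div 2) mod 2 + 2 * (v div 4)" using div_mult2_eq[of v 2 2] by simp
  have c: "v div 4 = (v div 4) mod 2 + 2 * (v div 8)" 
    using div_mult2_eq[of v 4 2] by simp
  have d: "v div 8 = (v div 8) mod 2" using assms by simp
  have "v = v mod 2 + 2 * ((v div 2) mod 2) + 4 * ((v div 4) mod 2) + 8 * (v div 8)"
    using a b c by linarith
  then have "int v = int (v mod 2) + 2 * int ((v div 2) mod 2) + 4 * int ((v div 4) mod 2) + 8 * int (v div 8)"
    by (metis of_nat_add of_nat_mult of_nat_numeral)
  then show ?thesis unfolding bt_def using d by simp
qed

definition enc :: "nat \<Rightarrow> int \<Rightarrow> nat \<Rightarrow> int \<times> int \<times> int \<times> int" where
 "enc r a v = ((2*a + int r * bt 0 v) mod (2 * int r), bt 1 v, bt 2 v, bt 3 v)"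

lemma t2: fixes a a' :: int assumes "odd r" "(2*a + int r * bt 0 v) mod 2 = (2*a' + int r * bt 0 v') mod 2"
  shows "bt 0 v = bt 0 v'"
proof -
  have o: "int r mod 2 = 1" using assms(1) by presburger
  have "(2*a + int r * c) mod 2 = c" if "c = 0 \<or> c = 1" for a c :: int
    using that
  proof
    assume "c = 0" then show ?thesis by simp
  next
    assume c: "c = 1"
    have "(2*a + int r) mod 2 = int r mod 2" by (metis add.commute mod_mult_self2 mult.commute)
    then show ?thesis using c o by simp
  qed
  then show ?thesis using assms(2) bt01[of 0 v] bt01[of 0 v'] by metis
qed
lemma t3: fixes a a' :: int assumes "odd r" "2*\<bar>a\<bar> < int r" "2*\<bar>a'\<bar> < int r"
  "(2*a + c) mod (2 * int r) = (2*a' + c) mod (2 * int r)" shows "a = a'"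
proof -
  have "(2 * int r) dvd ((2*a + c) - (2*a' + c))" using assms(4) by (simp add: mod_eq_dvd_iff)
  then have "2 * int r dvd 2 * (a - a')" by (simp add: algebra_simps)
  then have "int r dvd (a - a')" by (simp only: dvd_mult_cancel_left) simp
  then obtain q where q: "a - a' = int r * q" by (auto elim: dvdE)
  have "\<bar>int r * q\<bar> < int r" using q assms(2,3) by simp
  then have "int r * \<bar>q\<bar> < int r * 1" by (simp add: abs_mult)
  then have "\<bar>q\<bar> < 1" by (simp only: mult_less_cancel_left)
  then show ?thesis using q by simp
qed

lemma enc_inj: assumes "odd r" "enc r a v = enc r a' v'" "v < 16" "v' < 16"
  "2*\<bar>a\<bar> < int r" "2*\<bar>a'\<bar> < int r"
  shows "a = a' \<and> v = v'"
proof -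
  have e: "(2*a + int r * bt 0 v) mod (2 * int r) = (2*a' + int r * bt 0 v') mod (2 * int r)"
    and b: "bt 1 v = bt 1 v'" "bt 2 v = bt 2 v'" "bt 3 v = bt 3 v'"
    using assms(2) unfolding enc_def prod.inject by blast+
  have m: "x mod (2 * int r) mod 2 = x mod 2" for x :: int
    by (rule mod_mod_cancel) simp
  have "(2*a + int r * bt 0 v) mod (2 * int r) mod 2 = (2*a' + int r * bt 0 v') mod (2 * int r) mod 2"
    using e by simp
  then have "(2*a + int r * bt 0 v) mod 2 = (2*a' + int r * bt 0 v') mod 2"
    by (simp only: m)
  then have b0: "bt 0 v = bt 0 v'" using t2 assms(1) by blast
  have "int v = int v'" using bits16[OF assms(3)] bits16[OF assms(4)] b b0 by linarith
  then have vv: "v = v'" by simp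
  have "a = a'" using t3[OF assms(1,5,6), of "int r * bt 0 v"] e vv by blast
  then show ?thesis using vv by simp
qed

abbreviation HH :: "nat \<Rightarrow> (int \<times> int \<times> int \<times> int) monoid" where
  "HH r \<equiv> integer_mod_group (2 * r) \<times>\<times> integer_mod_group 2 \<times>\<times> integer_mod_group 2 \<times>\<times> integer_mod_group 2"

lemma HH_group: "group (HH r)"
  by (intro DirProd_group group_integer_mod_group)

lemma bt_mod2[simp]: "bt b v mod 2 = bt b v"
  by (simp add: bt_def)

lemma enc_carrier: assumes "r > 0" shows "enc r a v \<in> carrier (HH r)"
  using assms bt01[of 1 v] bt01[of 2 v] bt01[of 3 v] by (auto simp: enc_def carrier_integer_mod_group)


lemma fp_sum:
  fixes G (structure)
  assumes G: "comm_group G" and h: "h \<in> hom (HH r) G" and r: "r > 0" and fin: "finite I"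
  shows "finprod G (\<lambda>t. h (enc r (a t) (v t))) I =
     h ((\<Sum>t\<in>I. 2 * a t + int r * bt 0 (v t)) mod (2 * int r), (\<Sum>t\<in>I. bt 1 (v t)) mod 2,
        (\<Sum>t\<in>I. bt 2 (v t)) mod 2, (\<Sum>t\<in>I. bt 3 (v t)) mod 2)"
  using fin
proof (induction I rule: finite_induct)
  case empty
  interpret comm_group G by (rule G)
  have "h \<one>\<^bsub>HH r\<^esub> = \<one>" by (rule hom_one[OF h HH_group is_group])
  then show ?case by simp
next
  case (insert x F)
  interpret comm_group G by (rule G)
  let ?S = "((\<Sum>t\<in>F. 2 * a t + int r * bt 0 (v t)) mod (2 * int r), (\<Sum>t\<in>F. bt 1 (v t)) mod 2,
        (\<Sum>t\<in>F. bt 2 (v t)) mod 2, (\<Sum>t\<in>F. bt 3 (v t)) mod 2)"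
  have Sc: "?S \<in> carrier (HH r)" using r by (auto simp: carrier_integer_mod_group)
  have ec: "enc r (a x) (v x) \<in> carrier (HH r)" by (rule enc_carrier[OF r])
  have "finprod G (\<lambda>t. h (enc r (a t) (v t))) (insert x F) = h (enc r (a x) (v x)) \<otimes> h ?S"
    using insert hom_in_carrier[OF h enc_carrier[OF r]] by (simp add: Pi_def)
  also have "\<dots> = h (enc r (a x) (v x) \<otimes>\<^bsub>HH r\<^esub> ?S)"
    using hom_mult[OF h ec Sc] by simp
  also have "enc r (a x) (v x) \<otimes>\<^bsub>HH r\<^esub> ?S =
     ((\<Sum>t\<in>insert x F. 2 * a t + int r * bt 0 (v t)) mod (2 * int r), (\<Sum>t\<in>insert x F. bt 1 (v t)) mod 2,
        (\<Sum>t\<in>insert x F. bt 2 (v t)) mod 2, (\<Sum>t\<in>insert x F. bt 3 (v t)) mod 2)"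
    by (simp only: enc_def mult_DirProd mult_integer_mod_group sum.insert[OF insert(1,2)] of_nat_mult
        of_nat_numeral mod_add_eq mod_add_left_eq mod_add_right_eq bt_mod2)
  finally show ?case .
qed

lemma line_one:
  fixes G (structure)
  assumes G: "comm_group G" and h: "h \<in> hom (HH r) G" and r: "r > 0" and fin: "finite I"
    and sa: "(\<Sum>t\<in>I. a t) = 0" and sb: "\<And>b. b < 4 \<Longrightarrow> even (\<Sum>t\<in>I. bt b (v t))"
  shows "finprod G (\<lambda>t. h (enc r (a t) (v t))) I = \<one>"
proof -
  interpret comm_group G by (rule G)
  obtain q where q: "(\<Sum>t\<in>I. bt 0 (v t)) = 2 * q" using sb[of 0] by (auto elim: evenE)
  have "(\<Sum>t\<in>I. 2 * a t + int r * bt 0 (v t)) = 2 * (\<Sum>t\<in>I. a t) + int r * (\<Sum>t\<in>I. bt 0 (v t))"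
    by (simp add: sum.distrib sum_distrib_left)
  also have "\<dots> = (2 * int r) * q" using sa q by simp
  finally have e0: "(\<Sum>t\<in>I. 2 * a t + int r * bt 0 (v t)) mod (2 * int r) = 0" by simp
  have e: "(\<Sum>t\<in>I. bt b (v t)) mod 2 = 0" if "b < 4" for b using sb[OF that] by presburger
  have "h \<one>\<^bsub>HH r\<^esub> = \<one>" by (rule hom_one[OF h HH_group is_group])
  then show ?thesis using fp_sum[OF G h r fin, of a v] e0 e[of 1] e[of 2] e[of 3] by simp
qed


theorem lemma4p10:
  fixes r :: nat and G :: "('g, 'm) monoid_scheme"
  assumes "odd r" and "r \<ge> 3"
    and "comm_group G"
    and "G \<cong> integer_mod_group (2 * r) \<times>\<times> integer_mod_group 2 \<times>\<times>
               integer_mod_group 2 \<times>\<times> integer_mod_group 2"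
  shows "\<exists>A. is_MRS G r 8 2 A \<and> MRS_with G r 8 2 A \<one>\<^bsub>G\<^esub> \<one>\<^bsub>G\<^esub>"
proof -
  interpret G: comm_group G by (rule assms(3))
  have r0: "r > 0" using assms(2) by simp
  have "HH r \<cong> G" using G.iso_sym[OF assms(4)] .
  then obtain h where h: "h \<in> iso (HH r) G" unfolding is_iso_def by blast
  have hh: "h \<in> hom (HH r) G" using h by (simp add: iso_def)
  have hb: "bij_betw h (carrier (HH r)) (carrier G)" using h by (simp add: iso_def)
  define A where "A = (\<lambda>k i j. h (enc r (ga k i j) (gv k i j)))"
  define D where "D = {..<2::nat} \<times> {..<r} \<times> {..<8::nat}"
  define E where "E = (\<lambda>(k,i,j). enc r (ga k i j) (gv k i j))"
  have inj: "inj_on E D"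
  proof (rule inj_onI)
    fix x y assume xD: "x \<in> D" and yD: "y \<in> D" and xy: "E x = E y"
    obtain k i j where x: "x = (k,i,j)" by (cases x) auto
    obtain k' i' j' where y: "y = (k',i',j')" by (cases y) auto
    have rg: "k < 2" "i < r" "j < 8" "k' < 2" "i' < r" "j' < 8" using xD yD x y by (auto simp: D_def)
    have "enc r (ga k i j) (gv k i j) = enc r (ga k' i' j') (gv k' i' j')" using xy x y by (simp add: E_def)
    then have "ga k i j = ga k' i' j' \<and> gv k i j = gv k' i' j'"
      using enc_inj[OF assms(1)] gv_bound[OF rg(1,3)] gv_bound[OF rg(4,6)]
        ga_bound[OF assms(1,2) rg(2,1,3)] ga_bound[OF assms(1,2) rg(5,4,6)] by blast
    then have "k = k' \<and> i = i' \<and> j = j'" using cell_inj rg by blast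
    then show "x = y" using x y by simp
  qed
  have sub: "E ` D \<subseteq> carrier (HH r)"
  proof (rule image_subsetI)
    fix x assume "x \<in> D"
    obtain k i j where "x = (k,i,j)" by (cases x) auto
    then show "E x \<in> carrier (HH r)" using enc_carrier[OF r0] by (simp only: E_def case_prod_conv)
  qed
  have cD: "card D = 16 * r" by (simp add: D_def card_cartesian_product)
  have cH: "card (carrier (HH r)) = 16 * r" using r0 by (simp add: carrier_integer_mod_group card_cartesian_product)
  have fin: "finite (carrier (HH r))" using r0 by (simp add: carrier_integer_mod_group)
  have "card (E ` D) = card (carrier (HH r))" using card_image[OF inj] cD cH by simp
  then have "E ` D = carrier (HH r)" using card_subset_eq[OF fin sub] by blast
  then have "bij_betw E D (carrier (HH r))" using inj by (simp add: bij_betw_def)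
  then have bij: "bij_betw (h \<circ> E) D (carrier G)" using hb by (rule bij_betw_trans)
  have eqf: "(\<lambda>(k, i, j). A k i j) = h \<circ> E" by (auto simp: A_def E_def)
  have rows: "\<forall>k<2. \<forall>i<r. finprod G (\<lambda>j. A k i j) {..<8} = \<one>\<^bsub>G\<^esub>"
  proof (intro allI impI)
    fix k i assume k: "k < (2::nat)" and i: "i < r"
    show "finprod G (\<lambda>j. A k i j) {..<8} = \<one>\<^bsub>G\<^esub>"
      unfolding A_def
      by (rule line_one[OF assms(3) hh r0, of "{..<8}" "\<lambda>j. ga k i j" "\<lambda>j. gv k i j"])
         (simp_all add: row_a[OF k] row_b[OF k])
  qed
  have cols: "\<forall>k<2. \<forall>j<8. finprod G (\<lambda>i. A k i j) {..<r} = \<one>\<^bsub>G\<^esub>"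
  proof (intro allI impI)
    fix k j assume k: "k < (2::nat)" and j: "j < (8::nat)"
    show "finprod G (\<lambda>i. A k i j) {..<r} = \<one>\<^bsub>G\<^esub>"
      unfolding A_def
      by (rule line_one[OF assms(3) hh r0, of "{..<r}" "\<lambda>i. ga k i j" "\<lambda>i. gv k i j"])
         (simp_all add: col_a[OF assms(1,2) k j] col_b[OF assms(1,2) k j])
  qed
  have M: "MRS_with G r 8 2 A \<one>\<^bsub>G\<^esub> \<one>\<^bsub>G\<^esub>"
    unfolding MRS_with_def using bij eqf rows cols by (simp add: D_def)
  then have "is_MRS G r 8 2 A" unfolding is_MRS_def by blast
  then show ?thesis using M by blast
qed

end
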